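(* Let $t$ be a positive integer, let $n$ be sufficiently large compared to $t$, and let $G$ be an $n$-vertex graph with $e(G)\ge 5t^{3/2}n^{3/2}$. Then $G$ contains a non-empty $t^2$-rich collection of paths of length $2t-2$.
   Context: A path of length $2t-2$ has $2t-1$ vertices. For $\alpha>0$ and $k\in\mathbb{N}$, a collection $\mathcal{P}$ of labelled paths $x_1x_2\cdots x_k$ (distinct vertices) in $G$ is $\alpha$-rich if for every $x_1\cdots x_k\in\mathcal{P}$ and every $2\le i\le k-1$ there exist at least $\alpha$ distinct vertices $x_i'$ with $x_1\cdots x_{i-1}x_i'x_{i+1}\cdots x_k\in\mathcal{P}$. *)

theory Defs
  imports Complex_Main
begin

definition simple_graph :: "nat \<Rightarrow> nat set set \<Rightarrow> bool" where
  "simple_graph n E \<longleftrightarrow> (\<forall>e\<in>E. e \<subseteq> {..<n} \<and> card e = 2)"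

definition is_path :: "nat \<Rightarrow> nat set set \<Rightarrow> nat \<Rightarrow> nat list \<Rightarrow> bool" where
  "is_path n E k xs \<longleftrightarrow> length xs = k \<and> distinct xs \<and> set xs \<subseteq> {..<n} \<and>
     (\<forall>i. i + 1 < k \<longrightarrow> {xs ! i, xs ! (i+1)} \<in> E)"

text \<open>alpha-rich collection of labelled paths with k vertices (positions 2..k-1 in 1-based
  indexing are the list indices 1..k-2).\<close>
definition rich :: "nat \<Rightarrow> nat set set \<Rightarrow> nat \<Rightarrow> real \<Rightarrow> nat list set \<Rightarrow> bool" where
  "rich n E k \<alpha> P \<longleftrightarrow> (\<forall>xs\<in>P. is_path n E k xs) \<and>
     (\<forall>xs\<in>P. \<forall>i. 1 \<le> i \<and> i \<le> k - 2 \<longrightarrow> real (card {v. xs[i := v] \<in> P}) \<ge> \<alpha>)"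

end

theory Submission
  imports Defs
begin



lemma rich_core:
  fixes Q0 :: "nat list set" and w :: "nat list \<Rightarrow> real" and M :: "nat \<Rightarrow> nat list \<Rightarrow> real"
    and I :: "nat set" and \<alpha> :: real
  assumes fin: "finite Q0" and finI: "finite I"
    and len: "\<forall>q\<in>Q0. length q = k" and Ik: "\<forall>i\<in>I. i < k"
    and M0: "\<forall>i c. M i c \<ge> 0" and wM: "\<forall>q\<in>Q0. \<forall>i\<in>I. w q \<le> M i (q[i:=0])"
    and \<alpha>0: "\<alpha> \<ge> 0"
  shows "Q \<subseteq> Q0 \<Longrightarrow> (\<Sum>q\<in>Q. w q) > \<alpha> * (\<Sum>i\<in>I. \<Sum>c\<in>(\<lambda>q. q[i:=0]) ` Q. M i c) \<Longrightarrow>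
     \<exists>P\<subseteq>Q. P \<noteq> {} \<and> (\<forall>xs\<in>P. \<forall>i\<in>I. real (card {v. xs[i:=v] \<in> P}) \<ge> \<alpha>)"
proof (induction "card Q" arbitrary: Q rule: less_induct)
  case less
  have finQ: "finite Q" using less.prems fin finite_subset by blast
  show ?case
  proof (cases "\<forall>xs\<in>Q. \<forall>i\<in>I. real (card {v. xs[i:=v] \<in> Q}) \<ge> \<alpha>")
    case True
    have "Q \<noteq> {}" using less.prems by auto
    then show ?thesis using True by blast
  next
    case False
    then obtain p i where p: "p \<in> Q" and i: "i \<in> I" and lt: "real (card {v. p[i:=v] \<in> Q}) < \<alpha>"
      by (auto simp: not_le)
    define C where "C = {q\<in>Q. q[i:=0] = p[i:=0]}"
    define Q' where "Q' = Q - C"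
    have lp: "length p = k" using p less.prems len by auto
    have ilen: "i < length p" using lp Ik i by auto
    have C_eq: "C = (\<lambda>v. p[i:=v]) ` {v. p[i:=v] \<in> Q}"
    proof
      show "C \<subseteq> (\<lambda>v. p[i:=v]) ` {v. p[i:=v] \<in> Q}"
      proof
        fix q assume q: "q \<in> C"
        have lq: "length q = k" using q less.prems len by (auto simp: C_def)
        have "q = p[i := q!i]"
        proof (rule nth_equalityI)
          show "length q = length (p[i := q ! i])" using lq lp by simp
          fix j assume j: "j < length q"
          show "q ! j = p[i := q ! i] ! j"
          proof (cases "j = i")
            case True then show ?thesis using ilen by simp
          next
            case False
            have "q[i:=0] ! j = p[i:=0] ! j" using q by (simp add: C_def)
            then show ?thesis using False by simp
          qed
        qed
        then show "q \<in> (\<lambda>v. p[i:=v]) ` {v. p[i:=v] \<in> Q}" using q C_def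
          by (metis (mono_tags, lifting) image_eqI mem_Collect_eq)
      qed
    next
      show "(\<lambda>v. p[i:=v]) ` {v. p[i:=v] \<in> Q} \<subseteq> C" by (auto simp: C_def)
    qed
    have injp: "inj_on (\<lambda>v. p[i:=v]) {v. p[i:=v] \<in> Q}"
      by (rule inj_onI) (metis ilen nth_list_update_eq)
    have cardC: "card C = card {v. p[i:=v] \<in> Q}" using C_eq injp card_image by metis
    have CQ: "C \<subseteq> Q" by (auto simp: C_def)
    have pC: "p \<in> C" using p by (simp add: C_def)
    have wC: "(\<Sum>q\<in>C. w q) \<le> real (card C) * M i (p[i:=0])"
    proof (rule sum_bounded_above)
      fix q assume "q \<in> C"
      then have "q \<in> Q0" "q[i:=0] = p[i:=0]" using less.prems CQ by (auto simp: C_def)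
      then show "w q \<le> M i (p[i:=0])" using wM i by metis
    qed
    also have "\<dots> \<le> \<alpha> * M i (p[i:=0])"
      using cardC lt M0 by (intro mult_right_mono) auto
    finally have wC2: "(\<Sum>q\<in>C. w q) \<le> \<alpha> * M i (p[i:=0])" .
    have sumQ': "(\<Sum>q\<in>Q'. w q) = (\<Sum>q\<in>Q. w q) - (\<Sum>q\<in>C. w q)"
      unfolding Q'_def using sum_diff[OF finQ CQ] by simp
    define S where "S = (\<lambda>X j. \<Sum>c\<in>(\<lambda>q. q[j:=0]) ` X. M j c)"
    have Si: "S Q' i \<le> S Q i - M i (p[i:=0])"
    proof -
      have "S Q' i \<le> (\<Sum>c\<in>(\<lambda>q. q[i:=0]) ` Q - {p[i:=0]}. M i c)"
        unfolding S_def using finQ M0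
        by (intro sum_mono2) (auto simp: Q'_def C_def)
      also have "\<dots> = S Q i - M i (p[i:=0])"
        unfolding S_def using finQ p by (subst sum_diff1) auto
      finally show ?thesis .
    qed
    have Sj: "\<And>j. S Q' j \<le> S Q j"
      unfolding S_def using finQ M0 by (intro sum_mono2) (auto simp: Q'_def)
    have tot: "(\<Sum>j\<in>I. S Q' j) \<le> (\<Sum>j\<in>I. S Q j) - M i (p[i:=0])"
    proof -
      have "(\<Sum>j\<in>I. S Q' j) = S Q' i + (\<Sum>j\<in>I-{i}. S Q' j)" using sum.remove[OF finI i] by simp
      also have "\<dots> \<le> S Q i - M i (p[i:=0]) + (\<Sum>j\<in>I-{i}. S Q j)"
        using Si Sj by (intro add_mono sum_mono) auto
      also have "\<dots> = (\<Sum>j\<in>I. S Q j) - M i (p[i:=0])" using sum.remove[OF finI i, of "S Q"] by simp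
      finally show ?thesis .
    qed
    have ineq: "(\<Sum>q\<in>Q'. w q) > \<alpha> * (\<Sum>j\<in>I. S Q' j)"
    proof -
      have "\<alpha> * (\<Sum>j\<in>I. S Q' j) \<le> \<alpha> * ((\<Sum>j\<in>I. S Q j) - M i (p[i:=0]))"
        using tot \<alpha>0 by (rule mult_left_mono)
      also have "\<dots> = \<alpha> * (\<Sum>j\<in>I. S Q j) - \<alpha> * M i (p[i:=0])" by (simp add: algebra_simps)
      also have "\<dots> < (\<Sum>q\<in>Q. w q) - \<alpha> * M i (p[i:=0])" using less.prems(2) unfolding S_def by simp
      also have "\<dots> \<le> (\<Sum>q\<in>Q'. w q)" using sumQ' wC2 by simp
      finally show ?thesis .
    qed
    have cQ: "card Q' < card Q" unfolding Q'_def using finQ CQ pC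
      by (intro psubset_card_mono) auto
    have sQ: "Q' \<subseteq> Q0" using less.prems by (auto simp: Q'_def)
    have "\<exists>P\<subseteq>Q'. P \<noteq> {} \<and> (\<forall>xs\<in>P. \<forall>i\<in>I. real (card {v. xs[i:=v] \<in> P}) \<ge> \<alpha>)"
      using less.hyps[OF cQ sQ] ineq unfolding S_def by blast
    then show ?thesis unfolding Q'_def by blast
  qed
qed




definition nbr :: "nat set set \<Rightarrow> nat \<Rightarrow> nat set" where "nbr F v = {u. {v,u} \<in> F}"
definition walks :: "nat set set \<Rightarrow> nat \<Rightarrow> nat list set" where
  "walks F L = {xs. length xs = L \<and> set xs \<subseteq> \<Union>F \<and> (\<forall>j. j+1 < L \<longrightarrow> {xs!j, xs!(j+1)} \<in> F)}"
definition wt :: "nat set set \<Rightarrow> nat list \<Rightarrow> real" where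
  "wt F xs = prod_list (map (\<lambda>v. 1 / real (card (nbr F v))) xs)"
definition pw :: "nat set set \<Rightarrow> nat \<Rightarrow> nat list set" where
  "pw F L = {xs \<in> walks F L. distinct xs}"

lemma nbr_sub: "nbr F v \<subseteq> \<Union>F" by (auto simp: nbr_def)

lemma wt_nonneg: "wt F xs \<ge> 0"
  unfolding wt_def by (induction xs) auto

lemma wt_append: "wt F (xs @ ys) = wt F xs * wt F ys"
  unfolding wt_def by simp

lemma wt_snoc: "xs \<noteq> [] \<Longrightarrow> wt F xs = wt F (butlast xs) * (1 / real (card (nbr F (last xs))))"
proof -
  assume ne: "xs \<noteq> []"
  have "wt F xs = wt F (butlast xs @ [last xs])" using ne by simp
  also have "\<dots> = wt F (butlast xs) * wt F [last xs]" by (rule wt_append)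
  finally show ?thesis by (simp add: wt_def)
qed

lemma finite_walks: "finite (\<Union>F) \<Longrightarrow> finite (walks F L)"
  by (rule finite_subset[OF _ finite_lists_length_eq[of "\<Union>F" L]]) (auto simp: walks_def)

lemma walks_Suc:
  assumes "1 \<le> L"
  shows "walks F (Suc L) = (\<lambda>(xs,y). xs @ [y]) ` Sigma (walks F L) (\<lambda>xs. nbr F (last xs))"
proof
  show "walks F (Suc L) \<subseteq> (\<lambda>(xs,y). xs @ [y]) ` Sigma (walks F L) (\<lambda>xs. nbr F (last xs))"
  proof
    fix zs assume zs: "zs \<in> walks F (Suc L)"
    have lz: "length zs = Suc L" using zs by (simp add: walks_def)
    then have ne: "zs \<noteq> []" by auto
    define xs where "xs = butlast zs"
    define y where "y = last zs"
    have zeq: "zs = xs @ [y]" using ne by (simp add: xs_def y_def)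
    have lx: "length xs = L" using lz by (simp add: xs_def)
    have xw: "xs \<in> walks F L"
    proof -
      have "set xs \<subseteq> \<Union>F" using zs by (auto simp: walks_def xs_def dest: in_set_butlastD)
      moreover have "\<forall>j. j+1 < L \<longrightarrow> {xs!j, xs!(j+1)} \<in> F"
      proof (intro allI impI)
        fix j assume j: "j+1 < L"
        have "{zs!j, zs!(j+1)} \<in> F" using zs j by (auto simp: walks_def)
        moreover have "xs!j = zs!j" "xs!(j+1) = zs!(j+1)" using j lx unfolding xs_def
          by (auto simp: nth_butlast)
        ultimately show "{xs!j, xs!(j+1)} \<in> F" by simp
      qed
      ultimately show ?thesis using lx by (simp add: walks_def)
    qed
    have "\<forall>j<L. {zs!j, zs!(Suc j)} \<in> F" using zs by (auto simp: walks_def)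
    then have "{zs!(L-1), zs!(Suc (L-1))} \<in> F" using assms by (metis diff_less zero_less_one less_le_trans)
    then have "{zs!(L-1), zs!L} \<in> F" using assms by simp
    moreover have "zs!(L-1) = last xs" using lx assms zeq
    proof -
      have ne: "xs \<noteq> []" using lx assms by auto
      have "zs!(L-1) = xs!(L-1)" using zeq lx assms by (simp add: nth_append)
      also have "\<dots> = last xs" using ne lx by (simp add: last_conv_nth)
      finally show ?thesis .
    qed
    moreover have "zs!L = y" using lx zeq by (simp add: nth_append)
    ultimately have "y \<in> nbr F (last xs)" by (simp add: nbr_def)
    then show "zs \<in> (\<lambda>(xs,y). xs @ [y]) ` Sigma (walks F L) (\<lambda>xs. nbr F (last xs))"
      using xw zeq by force
  qed
next
  show "(\<lambda>(xs,y). xs @ [y]) ` Sigma (walks F L) (\<lambda>xs. nbr F (last xs)) \<subseteq> walks F (Suc L)"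
  proof
    fix zs assume "zs \<in> (\<lambda>(xs,y). xs @ [y]) ` Sigma (walks F L) (\<lambda>xs. nbr F (last xs))"
    then obtain xs y where xw: "xs \<in> walks F L" and y: "y \<in> nbr F (last xs)" and zeq: "zs = xs @ [y]"
      by auto
    have lx: "length xs = L" using xw by (simp add: walks_def)
    have e: "{last xs, y} \<in> F" using y by (simp add: nbr_def)
    have "set zs \<subseteq> \<Union>F" using xw e zeq by (auto simp: walks_def)
    moreover have "\<forall>j. j+1 < Suc L \<longrightarrow> {zs!j, zs!(j+1)} \<in> F"
    proof (intro allI impI)
      fix j assume j: "j+1 < Suc L"
      show "{zs!j, zs!(j+1)} \<in> F"
      proof (cases "j+1 < L")
        case True
        then show ?thesis using xw lx zeq by (auto simp: walks_def nth_append)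
      next
        case False
        then have "j + 1 = L" using j by simp
        then have "last xs = xs ! j" using lx
        proof -
          have "xs \<noteq> []" using lx \<open>j+1 = L\<close> by auto
          then have "last xs = xs ! (length xs - 1)" by (rule last_conv_nth)
          moreover have "length xs - 1 = j" using lx \<open>j+1 = L\<close> by simp
          ultimately show ?thesis by simp
        qed
        then show ?thesis using e lx zeq \<open>j+1 = L\<close> by (auto simp: nth_append)
      qed
    qed
    ultimately show "zs \<in> walks F (Suc L)" using lx zeq by (simp add: walks_def)
  qed
qed

lemma inj_snoc: "inj_on (\<lambda>(xs,y). xs @ [y]) A"
  by (rule inj_onI) auto

lemma walks_one: "walks F (Suc 0) = (\<lambda>v. [v]) ` (\<Union>F)"
proof
  show "walks F (Suc 0) \<subseteq> (\<lambda>v. [v]) ` (\<Union>F)"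
  proof
    fix xs assume "xs \<in> walks F (Suc 0)"
    then have "length xs = 1" "set xs \<subseteq> \<Union>F" by (auto simp: walks_def)
    then show "xs \<in> (\<lambda>v. [v]) ` (\<Union>F)" by (cases xs) auto
  qed
qed (auto simp: walks_def)

lemma sum_walks:
  assumes fin: "finite (\<Union>F)" and pos: "\<forall>v\<in>\<Union>F. card (nbr F v) > 0" and L: "1 \<le> L"
  shows "(\<Sum>xs\<in>walks F L. wt F (butlast xs)) = real (card (\<Union>F))"
  using L
proof (induction L rule: nat_induct_at_least)
  case base
  have "(\<Sum>xs\<in>walks F 1. wt F (butlast xs)) = (\<Sum>v\<in>\<Union>F. wt F (butlast [v]))"
    by (simp add: walks_one sum.reindex inj_on_def)
  also have "\<dots> = real (card (\<Union>F))" by (simp add: wt_def)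
  finally show ?case .
next
  case (Suc L)
  have finS: "\<And>xs. finite (nbr F (last xs))" using fin nbr_sub finite_subset by metis
  have "(\<Sum>xs\<in>walks F (Suc L). wt F (butlast xs))
      = (\<Sum>p\<in>Sigma (walks F L) (\<lambda>xs. nbr F (last xs)). wt F (butlast ((\<lambda>(xs,y). xs @ [y]) p)))"
    unfolding walks_Suc[OF Suc.hyps(1)] by (subst sum.reindex[OF inj_snoc]) (simp add: comp_def)
  also have "\<dots> = (\<Sum>(xs,y)\<in>Sigma (walks F L) (\<lambda>xs. nbr F (last xs)). wt F (butlast (xs @ [y])))"
    by (simp add: case_prod_unfold)
  also have "\<dots> = (\<Sum>xs\<in>walks F L. \<Sum>y\<in>nbr F (last xs). wt F (butlast (xs @ [y])))"
    by (rule sum.Sigma[symmetric]) (auto simp: finite_walks fin finS)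
  also have "\<dots> = (\<Sum>xs\<in>walks F L. \<Sum>y\<in>nbr F (last xs). wt F xs)" by simp
  also have "\<dots> = (\<Sum>xs\<in>walks F L. wt F (butlast xs))"
  proof (rule sum.cong[OF refl])
    fix xs assume xs: "xs \<in> walks F L"
    then have ne: "xs \<noteq> []" using Suc.hyps(1) by (auto simp: walks_def)
    then have "last xs \<in> \<Union>F" using xs by (auto simp: walks_def dest!: last_in_set)
    then have c: "card (nbr F (last xs)) > 0" using pos by auto
    show "(\<Sum>y\<in>nbr F (last xs). wt F xs) = wt F (butlast xs)"
      using c by (simp add: wt_snoc[OF ne])
  qed
  also have "\<dots> = real (card (\<Union>F))" using Suc.IH .
  finally show ?case .
qed




lemma aux_ratio:
  fixes D \<delta> c L K :: real
  assumes "D \<ge> \<delta>" "\<delta> > 0" "c \<ge> D - L" "L \<le> K" "L \<ge> 0"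
  shows "c / D \<ge> 1 - K / \<delta>"
proof -
  have D0: "D > 0" using assms by simp
  have "c / D \<ge> (D - L) / D" using assms D0 by (simp add: divide_right_mono)
  also have "(D - L) / D = 1 - L / D" using D0 by (simp add: field_simps)
  finally have 1: "c / D \<ge> 1 - L / D" .
  have "L / D \<le> L / \<delta>" using assms by (intro divide_left_mono) auto
  also have "\<dots> \<le> K / \<delta>" using assms by (intro divide_right_mono) auto
  finally show ?thesis using 1 by simp
qed

lemma finite_pw: "finite (\<Union>F) \<Longrightarrow> finite (pw F L)"
  using finite_walks by (simp add: pw_def)

lemma sum_pw:
  assumes fin: "finite (\<Union>F)" and deg: "\<forall>v\<in>\<Union>F. real (card (nbr F v)) \<ge> \<delta>" and \<delta>0: "\<delta> > 0"
    and K: "real K \<le> \<delta>" and L: "1 \<le> L"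
  shows "L \<le> K \<longrightarrow> (\<Sum>xs\<in>pw F L. wt F (butlast xs)) \<ge> real (card (\<Union>F)) * (1 - K/\<delta>)^(L-1)"
  using L
proof (induction L rule: nat_induct_at_least)
  case base
  have pos: "\<forall>v\<in>\<Union>F. card (nbr F v) > 0" using deg \<delta>0
    by (metis of_nat_0 of_nat_0_less_iff order_less_le_trans)
  have "pw F 1 = walks F 1" by (auto simp: pw_def walks_one)
  then show ?case using sum_walks[OF fin pos, of 1] by simp
next
  case (Suc L)
  show ?case
  proof
    assume SK: "Suc L \<le> K"
    define f where "f = (\<lambda>(xs::nat list,y::nat). xs @ [y])"
    define S where "S = Sigma (pw F L) (\<lambda>xs. nbr F (last xs) - set xs)"
    have finN: "\<And>xs. finite (nbr F (last xs) - set xs)" using fin nbr_sub finite_subset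
      by (metis finite_Diff)
    have sub: "f ` S \<subseteq> pw F (Suc L)"
    proof
      fix zs assume "zs \<in> f ` S"
      then obtain xs y where xs: "xs \<in> pw F L" and y: "y \<in> nbr F (last xs)" "y \<notin> set xs"
        and z: "zs = xs @ [y]" by (auto simp: S_def f_def)
      have "zs \<in> walks F (Suc L)" unfolding walks_Suc[OF Suc.hyps(1)] using xs y z
        by (auto simp: pw_def)
      moreover have "distinct zs" using xs y z by (auto simp: pw_def)
      ultimately show "zs \<in> pw F (Suc L)" by (simp add: pw_def)
    qed
    have "(\<Sum>xs\<in>pw F (Suc L). wt F (butlast xs)) \<ge> (\<Sum>zs\<in>f ` S. wt F (butlast zs))"
      by (rule sum_mono2[OF finite_pw[OF fin] sub]) (simp add: wt_nonneg)
    moreover have "(\<Sum>zs\<in>f ` S. wt F (butlast zs)) = (\<Sum>p\<in>S. wt F (butlast (f p)))"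
      unfolding f_def by (subst sum.reindex[OF inj_snoc]) (simp add: comp_def)
    moreover have "\<dots> = (\<Sum>(xs,y)\<in>S. wt F xs)" by (simp add: f_def case_prod_unfold)
    moreover have "\<dots> = (\<Sum>xs\<in>pw F L. \<Sum>y\<in>nbr F (last xs) - set xs. wt F xs)"
      unfolding S_def by (rule sum.Sigma[symmetric]) (auto simp: finite_pw fin finN)
    moreover have "\<dots> \<ge> (\<Sum>xs\<in>pw F L. (1 - K/\<delta>) * wt F (butlast xs))"
    proof (rule sum_mono)
      fix xs assume xs: "xs \<in> pw F L"
      then have ne: "xs \<noteq> []" and lx: "length xs = L" using Suc.hyps(1) by (auto simp: pw_def walks_def)
      have "last xs \<in> \<Union>F" using xs ne by (auto simp: pw_def walks_def dest!: last_in_set)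
      then have D: "real (card (nbr F (last xs))) \<ge> \<delta>" using deg by auto
      have "card (nbr F (last xs)) - card (set xs) \<le> card (nbr F (last xs) - set xs)"
        by (rule diff_card_le_card_Diff) simp
      moreover have "card (set xs) \<le> L" using lx card_length by metis
      ultimately have c: "real (card (nbr F (last xs) - set xs)) \<ge> real (card (nbr F (last xs))) - real L"
        by linarith
      have r: "real (card (nbr F (last xs) - set xs)) / real (card (nbr F (last xs))) \<ge> 1 - K/\<delta>"
        by (rule aux_ratio[OF D \<delta>0 c]) (use SK in auto)
      have "(\<Sum>y\<in>nbr F (last xs) - set xs. wt F xs)
          = (real (card (nbr F (last xs) - set xs)) / real (card (nbr F (last xs)))) * wt F (butlast xs)"
        by (simp add: wt_snoc[OF ne])
      also have "\<dots> \<ge> (1 - K/\<delta>) * wt F (butlast xs)"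
        by (rule mult_right_mono[OF r wt_nonneg])
      finally show "(1 - K/\<delta>) * wt F (butlast xs) \<le> (\<Sum>y\<in>nbr F (last xs) - set xs. wt F xs)" .
    qed
    moreover have "(\<Sum>xs\<in>pw F L. (1 - K/\<delta>) * wt F (butlast xs)) = (1 - K/\<delta>) * (\<Sum>xs\<in>pw F L. wt F (butlast xs))"
      by (simp add: sum_distrib_left)
    moreover have "(1 - K/\<delta>) * (\<Sum>xs\<in>pw F L. wt F (butlast xs)) \<ge> (1 - K/\<delta>) * (real (card (\<Union>F)) * (1 - K/\<delta>)^(L-1))"
    proof (rule mult_left_mono)
      show "real (card (\<Union>F)) * (1 - K/\<delta>)^(L-1) \<le> (\<Sum>xs\<in>pw F L. wt F (butlast xs))"
        using Suc.IH SK by simp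
      show "0 \<le> 1 - K/\<delta>" using K \<delta>0 by (simp add: field_simps)
    qed
    moreover have "(1 - K/\<delta>) * (real (card (\<Union>F)) * (1 - K/\<delta>)^(L-1)) = real (card (\<Union>F)) * (1 - K/\<delta>)^(Suc L - 1)"
      using Suc.hyps(1) by (cases L) (auto simp: algebra_simps)
    ultimately show "(\<Sum>xs\<in>pw F (Suc L). wt F (butlast xs)) \<ge> real (card (\<Union>F)) * (1 - K/\<delta>)^(Suc L - 1)"
      by linarith
  qed
qed




lemma take_walks: "q \<in> walks F k \<Longrightarrow> i \<le> k \<Longrightarrow> take i q \<in> walks F i"
proof -
  assume q: "q \<in> walks F k" and ik: "i \<le> k"
  have lq: "length q = k" using q by (simp add: walks_def)
  have "set (take i q) \<subseteq> \<Union>F" using q set_take_subset by (fastforce simp: walks_def)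
  moreover have "\<forall>j. j+1 < i \<longrightarrow> {take i q ! j, take i q ! (j+1)} \<in> F"
  proof (intro allI impI)
    fix j assume j: "j+1 < i"
    have "{q!j, q!(j+1)} \<in> F" using q j ik by (auto simp: walks_def)
    then show "{take i q ! j, take i q ! (j+1)} \<in> F" using j by simp
  qed
  ultimately show ?thesis using lq ik by (simp add: walks_def)
qed

lemma drop_walks: "q \<in> walks F k \<Longrightarrow> drop j q \<in> walks F (k - j)"
proof -
  assume q: "q \<in> walks F k"
  have "set (drop j q) \<subseteq> \<Union>F" using q set_drop_subset by (fastforce simp: walks_def)
  moreover have "\<forall>i. i+1 < k - j \<longrightarrow> {drop j q ! i, drop j q ! (i+1)} \<in> F"
  proof (intro allI impI)
    fix i assume i: "i+1 < k - j"
    have lq: "length q = k" using q by (simp add: walks_def)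
    have "{q!(j+i), q!(j+i+1)} \<in> F" using q i by (auto simp: walks_def)
    then show "{drop j q ! i, drop j q ! (i+1)} \<in> F" using lq i by (simp add: add.commute add.left_commute)
  qed
  ultimately show ?thesis using q by (simp add: walks_def)
qed

lemma butlast_split:
  assumes "Suc i < length q"
  shows "butlast q = take i q @ q!i # butlast (drop (Suc i) q)"
proof -
  define r where "r = drop (Suc i) q"
  have q: "q = take i q @ q!i # r" unfolding r_def using assms by (intro id_take_nth_drop) simp
  have rne: "r \<noteq> []" using assms by (simp add: r_def)
  have "butlast q = butlast (take i q @ q!i # r)" using q by simp
  also have "\<dots> = take i q @ butlast (q!i # r)" by (simp add: butlast_append)
  also have "\<dots> = take i q @ q!i # butlast r" using rne by simp
  finally show ?thesis by (simp add: r_def)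
qed

definition Mf :: "nat set set \<Rightarrow> real \<Rightarrow> nat \<Rightarrow> nat list \<Rightarrow> real" where
  "Mf F \<delta> i c = (1/\<delta>) * wt F (take i c) * wt F (butlast (drop (Suc i) c))"

lemma Mf_nonneg: "\<delta> > 0 \<Longrightarrow> Mf F \<delta> i c \<ge> 0"
  unfolding Mf_def by (simp add: wt_nonneg)

lemma w_le_Mf:
  assumes deg: "\<forall>v\<in>\<Union>F. real (card (nbr F v)) \<ge> \<delta>" and \<delta>0: "\<delta> > 0"
    and q: "q \<in> walks F k" and i: "Suc i < k"
  shows "wt F (butlast q) \<le> Mf F \<delta> i (q[i:=0])"
proof -
  have lq: "length q = k" using q by (simp add: walks_def)
  have qi: "q!i \<in> \<Union>F" using q i lq by (auto simp: walks_def)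
  then have D: "real (card (nbr F (q!i))) \<ge> \<delta>" using deg by auto
  have "wt F (butlast q) = wt F (take i q) * (1 / real (card (nbr F (q!i)))) * wt F (butlast (drop (Suc i) q))"
    using butlast_split[of i q] i lq by (simp add: wt_append wt_def)
  also have "\<dots> \<le> wt F (take i q) * (1/\<delta>) * wt F (butlast (drop (Suc i) q))"
    using D \<delta>0 by (intro mult_right_mono mult_left_mono) (auto simp: wt_nonneg frac_le)
  also have "\<dots> = Mf F \<delta> i (q[i:=0])"
    unfolding Mf_def using i lq by simp
  finally show ?thesis .
qed

lemma sum_walks_full:
  assumes fin: "finite (\<Union>F)" and deg: "\<forall>v\<in>\<Union>F. real (card (nbr F v)) \<ge> \<delta>" and \<delta>0: "\<delta> > 0"
    and L: "1 \<le> L"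
  shows "(\<Sum>xs\<in>walks F L. wt F xs) \<le> real (card (\<Union>F)) / \<delta>"
proof -
  have pos: "\<forall>v\<in>\<Union>F. card (nbr F v) > 0" using deg \<delta>0
    by (metis of_nat_0 of_nat_0_less_iff order_less_le_trans)
  have "(\<Sum>xs\<in>walks F L. wt F xs) \<le> (\<Sum>xs\<in>walks F L. wt F (butlast xs) * (1/\<delta>))"
  proof (rule sum_mono)
    fix xs assume xs: "xs \<in> walks F L"
    then have ne: "xs \<noteq> []" using L by (auto simp: walks_def)
    have "last xs \<in> \<Union>F" using xs ne by (auto simp: walks_def dest!: last_in_set)
    then have D: "real (card (nbr F (last xs))) \<ge> \<delta>" using deg by auto
    show "wt F xs \<le> wt F (butlast xs) * (1/\<delta>)"
      unfolding wt_snoc[OF ne] using D \<delta>0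
      by (intro mult_left_mono) (auto simp: wt_nonneg frac_le)
  qed
  also have "\<dots> = real (card (\<Union>F)) / \<delta>"
    using sum_walks[OF fin pos L] by (simp add: sum_divide_distrib[symmetric])
  finally show ?thesis .
qed

lemma punct_sum:
  assumes fin: "finite (\<Union>F)" and deg: "\<forall>v\<in>\<Union>F. real (card (nbr F v)) \<ge> \<delta>" and \<delta>0: "\<delta> > 0"
    and i1: "1 \<le> i" and ik: "Suc (Suc i) \<le> k"
  shows "(\<Sum>c\<in>(\<lambda>q. q[i:=0]) ` pw F k. Mf F \<delta> i c) \<le> real (card (\<Union>F))^2 / \<delta>^2"
proof -
  let ?m = "real (card (\<Union>F))"
  define g where "g = (\<lambda>c::nat list. (take i c, drop (Suc i) c))"
  define h where "h = (\<lambda>(a,b). (1/\<delta>) * wt F a * wt F (butlast b))"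
  define Im where "Im = (\<lambda>q. q[i:=0]) ` pw F k"
  have injg: "inj_on g Im"
  proof (rule inj_onI)
    fix c c' assume c: "c \<in> Im" and c': "c' \<in> Im" and e: "g c = g c'"
    have "\<And>c. c \<in> Im \<Longrightarrow> c = take i c @ 0 # drop (Suc i) c"
    proof -
      fix c assume "c \<in> Im"
      then obtain q where q: "q \<in> pw F k" and cq: "c = q[i:=0]" by (auto simp: Im_def)
      have "length q = k" using q by (simp add: pw_def walks_def)
      then have "i < length c" using cq ik by simp
      moreover have "c!i = 0" using cq \<open>i < length c\<close> by simp
      ultimately show "c = take i c @ 0 # drop (Suc i) c" using id_take_nth_drop by fastforce
    qed
    then have 1: "c = take i c @ 0 # drop (Suc i) c" "c' = take i c' @ 0 # drop (Suc i) c'"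
      using c c' by blast+
    have "take i c = take i c'" "drop (Suc i) c = drop (Suc i) c'" using e by (auto simp: g_def)
    then show "c = c'" using 1 by metis
  qed
  have sub: "g ` Im \<subseteq> walks F i \<times> walks F (k - Suc i)"
  proof
    fix p assume "p \<in> g ` Im"
    then obtain q where q: "q \<in> pw F k" and p: "p = g (q[i:=0])" by (auto simp: Im_def)
    have qw: "q \<in> walks F k" using q by (simp add: pw_def)
    have "take i (q[i:=0]) = take i q" by simp
    moreover have "drop (Suc i) (q[i:=0]) = drop (Suc i) q" by simp
    ultimately show "p \<in> walks F i \<times> walks F (k - Suc i)"
      using take_walks[OF qw, of i] drop_walks[OF qw, of "Suc i"] ik p g_def by simp
  qed
  have "(\<Sum>c\<in>Im. Mf F \<delta> i c) = (\<Sum>c\<in>Im. h (g c))"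
    by (simp add: Mf_def h_def g_def)
  also have "\<dots> = (\<Sum>p\<in>g ` Im. h p)" by (simp add: sum.reindex[OF injg])
  also have "\<dots> \<le> (\<Sum>p\<in>walks F i \<times> walks F (k - Suc i). h p)"
    by (rule sum_mono2[OF _ sub]) (auto simp: finite_walks fin h_def wt_nonneg \<delta>0 less_imp_le)
  also have "\<dots> = (\<Sum>a\<in>walks F i. \<Sum>b\<in>walks F (k - Suc i). h (a,b))"
    by (simp add: sum.cartesian_product case_prod_unfold)
  also have "\<dots> = (\<Sum>a\<in>walks F i. ((1/\<delta>) * wt F a) * (\<Sum>b\<in>walks F (k - Suc i). wt F (butlast b)))"
    unfolding h_def by (simp only: prod.case sum_distrib_left)
  also have "\<dots> = (\<Sum>a\<in>walks F i. (1/\<delta>) * wt F a) * (\<Sum>b\<in>walks F (k - Suc i). wt F (butlast b))"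
    by (simp only: sum_distrib_right)
  also have "\<dots> = (1/\<delta>) * (\<Sum>a\<in>walks F i. wt F a) * (\<Sum>b\<in>walks F (k - Suc i). wt F (butlast b))"
    by (simp only: sum_distrib_left)
  also have "\<dots> \<le> (1/\<delta>) * (?m / \<delta>) * ?m"
  proof -
    have pos: "\<forall>v\<in>\<Union>F. card (nbr F v) > 0" using deg \<delta>0
      by (metis of_nat_0 of_nat_0_less_iff order_less_le_trans)
    have B: "(\<Sum>b\<in>walks F (k - Suc i). wt F (butlast b)) = ?m"
      by (rule sum_walks[OF fin pos]) (use ik in simp)
    have A: "(\<Sum>a\<in>walks F i. wt F a) \<le> ?m / \<delta>" by (rule sum_walks_full[OF fin deg \<delta>0 i1])
    have "(1/\<delta>) * (\<Sum>a\<in>walks F i. wt F a) \<le> (1/\<delta>) * (?m / \<delta>)"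
      by (rule mult_left_mono[OF A]) (use \<delta>0 in simp)
    then show ?thesis unfolding B by (rule mult_right_mono) simp
  qed
  also have "\<dots> = ?m^2 / \<delta>^2" by (simp add: power2_eq_square)
  finally show ?thesis unfolding Im_def .
qed




lemma powr32_sq: "(x::real) > 0 \<Longrightarrow> (x powr (3/2))^2 = x^3"
proof -
  assume x: "x > 0"
  have "(x powr (3/2))^2 = x powr (3/2) * x powr (3/2)" by (simp add: power2_eq_square)
  also have "\<dots> = x powr (3/2 + 3/2)" by (rule powr_add[symmetric])
  also have "\<dots> = x powr (real 3)" by simp
  also have "\<dots> = x^3" using x by (rule powr_realpow)
  finally show ?thesis .
qed

lemma numerics:
  fixes T X e :: real
  assumes T: "T \<ge> 1" and X: "X \<ge> 11*T" and e: "e \<ge> 5 * T powr (3/2) * X powr (3/2)"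
  shows "(e/(2*X))^2 \<ge> 25/4 * T^3 * X" and "e/(2*X) \<ge> 8*T^2"
proof -
  have X0: "X > 0" using T X by linarith
  have T0: "T > 0" using T by linarith
  define A where "A = T powr (3/2)"
  define B where "B = X powr (3/2)"
  have A2: "A^2 = T^3" using powr32_sq[OF T0] by (simp add: A_def)
  have B2: "B^2 = X^3" using powr32_sq[OF X0] by (simp add: B_def)
  have AB0: "5 * A * B \<ge> 0" by (simp add: A_def B_def)
  have "e^2 \<ge> (5*A*B)^2" using e AB0 unfolding A_def B_def by (intro power_mono) auto
  also have "(5*A*B)^2 = 25 * T^3 * X^3" using A2 B2 by (simp add: power_mult_distrib)
  finally have e2: "e^2 \<ge> 25 * T^3 * X^3" .
  have "(e/(2*X))^2 = e^2 / (4 * X^2)" by (simp add: power_divide power_mult_distrib)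
  also have "\<dots> \<ge> 25 * T^3 * X^3 / (4 * X^2)" using e2 X0 by (intro divide_right_mono) auto
  also have "25 * T^3 * X^3 / (4 * X^2) = 25/4 * T^3 * X" using X0 by (simp add: power2_eq_square power3_eq_cube field_simps)
  finally show 1: "(e/(2*X))^2 \<ge> 25/4 * T^3 * X" .
  have "25/4 * T^3 * X \<ge> 25/4 * T^3 * (11*T)" using X T0 by (intro mult_left_mono) auto
  moreover have "25/4 * T^3 * (11*T) \<ge> (8*T^2)^2"
  proof -
    have e1: "25/4 * T^3 * (11*T) = 275/4 * T^4" by (simp add: eval_nat_numeral)
    have e2: "(8*T^2)^2 = 64 * T^4" by (simp add: eval_nat_numeral)
    have "T^4 \<ge> 0" by simp
    then show ?thesis unfolding e1 e2 by linarith
  qed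
  ultimately have "(8*T^2)^2 \<le> (e/(2*X))^2" using 1 by linarith
  moreover have "e \<ge> 0" using AB0 e unfolding A_def B_def by linarith
  then have "e/(2*X) \<ge> 0" using X0 by simp
  ultimately show "e/(2*X) \<ge> 8*T^2" by (rule power2_le_imp_le)
qed



lemma dense_sub:
  fixes E :: "nat set set" and c :: real
  assumes finE: "finite E" and two: "\<forall>e\<in>E. card e = 2" and finU: "finite (\<Union>E)" and c0: "c \<ge> 0"
    and big: "c * real (card (\<Union>E)) < real (card E)"
  shows "\<exists>F\<subseteq>E. F \<noteq> {} \<and> (\<forall>v\<in>\<Union>F. real (card (nbr F v)) \<ge> c)"
proof -
  define f where "f = (\<lambda>F::nat set set. real (card F) - c * real (card (\<Union>F)))"
  have fin: "finite (f ` Pow E)" using finE by simp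
  have ne: "f ` Pow E \<noteq> {}" by auto
  obtain F where F: "F \<in> Pow E" "f F = Max (f ` Pow E)" using Max_in[OF fin ne] by auto
  have max: "\<forall>G\<in>Pow E. f G \<le> f F"
  proof
    fix G assume "G \<in> Pow E"
    then have "f G \<in> f ` Pow E" by (rule imageI)
    then show "f G \<le> f F" unfolding F(2) using Max_ge[OF fin] by blast
  qed
  have "f F \<ge> f E" using max by blast
  moreover have "f E > 0" using big by (simp add: f_def)
  ultimately have fpos: "f F > 0" by linarith
  have Fne: "F \<noteq> {}" using fpos by (auto simp: f_def)
  have FE: "F \<subseteq> E" using F by auto
  have finF: "finite F" using FE finE finite_subset by auto
  have finUF: "finite (\<Union>F)" using FE finU Union_mono finite_subset by metis
  have "\<forall>v\<in>\<Union>F. real (card (nbr F v)) \<ge> c"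
  proof (rule ccontr)
    assume "\<not> (\<forall>v\<in>\<Union>F. real (card (nbr F v)) \<ge> c)"
    then obtain v where v: "v \<in> \<Union>F" and lt: "real (card (nbr F v)) < c" by (meson not_le)
    define Inc where "Inc = {e\<in>F. v\<in>e}"
    define F' where "F' = F - Inc"
    have IncF: "Inc \<subseteq> F" by (auto simp: Inc_def)
    have cF: "card F' = card F - card Inc" unfolding F'_def using finF IncF by (meson card_Diff_subset finite_subset)
    have cle: "card Inc \<le> card F" using finF IncF card_mono by auto
    have Inc_sub: "Inc \<subseteq> (\<lambda>u. {v,u}) ` nbr F v"
    proof
      fix e assume e: "e \<in> Inc"
      then have eF: "e \<in> F" and ve: "v \<in> e" by (auto simp: Inc_def)
      have "card e = 2" using eF FE two by auto
      then obtain x y where xy: "e = {x,y}" "x \<noteq> y" unfolding card_2_iff by blast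
      show "e \<in> (\<lambda>u. {v,u}) ` nbr F v"
      proof (cases "v = x")
        case True
        then show ?thesis using xy eF by (auto simp: nbr_def)
      next
        case False
        then have "v = y" using ve xy by auto
        then have "e = {v,x}" using xy by auto
        then show ?thesis using eF by (auto simp: nbr_def)
      qed
    qed
    have finN: "finite (nbr F v)" using finUF nbr_sub finite_subset by metis
    have "card Inc \<le> card ((\<lambda>u. {v,u}) ` nbr F v)" using Inc_sub finN by (intro card_mono) auto
    also have "\<dots> \<le> card (nbr F v)" by (rule card_image_le[OF finN])
    finally have cI: "real (card Inc) < c" using lt by linarith
    have U': "\<Union>F' \<subseteq> \<Union>F - {v}" by (auto simp: F'_def Inc_def)
    have "card (\<Union>F') \<le> card (\<Union>F - {v})" using U' finUF by (intro card_mono) auto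
    also have "\<dots> = card (\<Union>F) - 1" using v finUF by simp
    finally have cU: "card (\<Union>F') \<le> card (\<Union>F) - 1" .
    have "card (\<Union>F) > 0" using v finUF card_gt_0_iff by blast
    then have pU: "card (\<Union>F) \<ge> 1" by simp
    have rU: "real (card (\<Union>F')) \<le> real (card (\<Union>F)) - 1" using cU pU by linarith
    have "f F' = real (card F) - real (card Inc) - c * real (card (\<Union>F'))"
      unfolding f_def using cF cle by (simp add: of_nat_diff)
    also have "\<dots> \<ge> real (card F) - real (card Inc) - c * (real (card (\<Union>F)) - 1)"
      using mult_left_mono[OF rU c0] by linarith
    finally have "f F' \<ge> f F + c - real (card Inc)" by (simp add: f_def algebra_simps)
    then have "f F' > f F" using cI by linarith
    moreover have "F' \<in> Pow E" using FE by (auto simp: F'_def)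
    ultimately show False using max by (meson not_le)
  qed
  then show ?thesis using FE Fne by auto
qed




theorem lemma3p6:
  shows "\<forall>t::nat. t > 0 \<longrightarrow> (\<exists>N::nat. \<forall>n\<ge>N. \<forall>E.
     simple_graph n E \<and> real (card E) \<ge> 5 * real t powr (3/2) * real n powr (3/2) \<longrightarrow>
     (\<exists>P. P \<noteq> {} \<and> rich n E (2*t - 1) (real t ^ 2) P))"
proof (intro allI impI)
  fix t :: nat assume t: "t > 0"
  show "\<exists>N::nat. \<forall>n\<ge>N. \<forall>E.
     simple_graph n E \<and> real (card E) \<ge> 5 * real t powr (3/2) * real n powr (3/2) \<longrightarrow>
     (\<exists>P. P \<noteq> {} \<and> rich n E (2*t - 1) (real t ^ 2) P)"
  proof (intro exI[of _ "11*t"] allI impI)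
    fix n :: nat and E :: "nat set set"
    assume n: "11*t \<le> n"
      and H: "simple_graph n E \<and> real (card E) \<ge> 5 * real t powr (3/2) * real n powr (3/2)"
    define T where "T = real t"
    define X where "X = real n"
    define e where "e = real (card E)"
    define k where "k = 2*t - 1"
    have T1: "T \<ge> 1" using t by (simp add: T_def)
    have X11: "X \<ge> 11 * T" using n by (simp add: T_def X_def)
    have X0: "X > 0" using T1 X11 by linarith
    have eb: "e \<ge> 5 * T powr (3/2) * X powr (3/2)" using H by (simp add: e_def T_def X_def)
    have epos: "e > 0"
    proof -
      have "5 * T powr (3/2) * X powr (3/2) > 0" using T1 X0 by simp
      then show ?thesis using eb by linarith
    qed
    have sg: "\<forall>e\<in>E. e \<subseteq> {..<n} \<and> card e = 2" using H by (simp add: simple_graph_def)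
    have EP: "E \<subseteq> Pow {..<n}" using sg by auto
    have finE: "finite E" using EP finite_subset by (metis finite_Pow_iff finite_lessThan)
    have UE: "\<Union>E \<subseteq> {..<n}" using sg by auto
    have finU: "finite (\<Union>E)" using UE finite_subset by blast
    have cUE: "card (\<Union>E) \<le> n" using UE card_mono[of "{..<n}"] by fastforce
    define \<delta> where "\<delta> = e / (2*X)"
    have \<delta>0: "\<delta> > 0" using epos X0 by (simp add: \<delta>_def)
    have "\<delta> * real (card (\<Union>E)) \<le> \<delta> * X" using cUE \<delta>0 by (simp add: X_def)
    also have "\<delta> * X = e / 2" using X0 by (simp add: \<delta>_def)
    also have "\<dots> < real (card E)" using epos by (simp add: e_def)
    finally have big: "\<delta> * real (card (\<Union>E)) < real (card E)" .
    obtain F where FE: "F \<subseteq> E" and Fne: "F \<noteq> {}" and deg: "\<forall>v\<in>\<Union>F. real (card (nbr F v)) \<ge> \<delta>"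
      using dense_sub[OF finE _ finU _ big] sg \<delta>0 by auto
    have UF: "\<Union>F \<subseteq> {..<n}" using FE UE by blast
    have finUF: "finite (\<Union>F)" using UF finite_subset by blast
    define m where "m = real (card (\<Union>F))"
    have mX: "m \<le> X" unfolding m_def X_def using UF card_mono[of "{..<n}"] by fastforce
    have m0: "m > 0"
    proof -
      obtain e0 where "e0 \<in> F" using Fne by auto
      then have "card e0 = 2" using FE sg by auto
      then obtain x y where "e0 = {x,y}" unfolding card_2_iff by blast
      then have "x \<in> \<Union>F" using \<open>e0 \<in> F\<close> by auto
      then have "card (\<Union>F) > 0" using finUF card_gt_0_iff by blast
      then show ?thesis by (simp add: m_def)
    qed
    have num1: "\<delta>^2 \<ge> 25/4 * T^3 * X" and num2: "\<delta> \<ge> 8*T^2"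
      using numerics[OF T1 X11 eb] by (simp_all add: \<delta>_def)
    have k1: "1 \<le> k" using t by (simp add: k_def)
    have kT: "real k \<le> 2*T" using t by (simp add: k_def T_def)
    have kk: "real k * real k \<le> 4 * T^2"
    proof -
      have "real k * real k \<le> (2*T) * (2*T)" using kT by (intro mult_mono) auto
      then show ?thesis by (simp add: power2_eq_square)
    qed
    have Kd: "real k \<le> \<delta>"
    proof -
      have "2*T \<le> 8*T^2" using T1 by (simp add: power2_eq_square)
      then show ?thesis using kT num2 by linarith
    qed
    define Q0 where "Q0 = pw F k"
    have low: "(\<Sum>q\<in>Q0. wt F (butlast q)) \<ge> m / 2"
    proof -
      have s1: "(\<Sum>q\<in>Q0. wt F (butlast q)) \<ge> m * (1 - real k/\<delta>)^(k-1)"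
        using sum_pw[OF finUF deg \<delta>0 Kd k1] by (simp add: Q0_def m_def)
      have "(1 + (- (real k/\<delta>)))^(k-1) \<ge> 1 + real (k-1) * (- (real k/\<delta>))"
        by (rule Bernoulli_inequality) (use Kd \<delta>0 in \<open>simp add: field_simps\<close>)
      then have b: "(1 - real k/\<delta>)^(k-1) \<ge> 1 - real (k-1) * real k / \<delta>" by simp
      have "real (k-1) * real k \<le> real k * real k" using k1 by (intro mult_right_mono) auto
      also have "\<dots> \<le> 4 * T^2" by (rule kk)
      also have "\<dots> \<le> \<delta> / 2" using num2 by simp
      finally have "real (k-1) * real k / \<delta> \<le> 1/2" using \<delta>0 by (simp add: field_simps)
      then have "(1 - real k/\<delta>)^(k-1) \<ge> 1/2" using b by linarith
      then have "m * (1 - real k/\<delta>)^(k-1) \<ge> m * (1/2)" using m0 by (intro mult_left_mono) auto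
      then show ?thesis using s1 by simp
    qed
    define I where "I = {i. 1 \<le> i \<and> i \<le> k - 2}"
    have I_eq: "I = {1..k-2}" by (auto simp: I_def)
    have finI: "finite I" by (simp add: I_eq)
    have cI: "real (card I) \<le> 2*T" using kT by (simp add: I_eq)
    define Mm where "Mm = Mf F \<delta>"
    have up: "(\<Sum>i\<in>I. \<Sum>c\<in>(\<lambda>q. q[i:=0]) ` Q0. Mm i c) \<le> real (card I) * (m^2/\<delta>^2)"
    proof (rule sum_bounded_above)
      fix i assume "i \<in> I"
      then have "1 \<le> i" "Suc (Suc i) \<le> k" by (auto simp: I_def)
      then show "(\<Sum>c\<in>(\<lambda>q. q[i:=0]) ` Q0. Mm i c) \<le> m^2/\<delta>^2"
        using punct_sum[OF finUF deg \<delta>0] by (simp add: Q0_def Mm_def m_def)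
    qed
    have main: "(\<Sum>q\<in>Q0. wt F (butlast q)) > T^2 * (\<Sum>i\<in>I. \<Sum>c\<in>(\<lambda>q. q[i:=0]) ` Q0. Mm i c)"
    proof -
      have "T^2 * (\<Sum>i\<in>I. \<Sum>c\<in>(\<lambda>q. q[i:=0]) ` Q0. Mm i c) \<le> T^2 * (real (card I) * (m^2/\<delta>^2))"
        using up by (intro mult_left_mono) auto
      also have "\<dots> \<le> T^2 * (2*T * (m^2/\<delta>^2))"
        using cI by (intro mult_left_mono mult_right_mono) auto
      also have "\<dots> = 2 * T^3 * m * m / \<delta>^2" by (simp add: power2_eq_square power3_eq_cube)
      also have "\<dots> \<le> 2 * T^3 * m * X / \<delta>^2"
        using mX m0 T1 by (intro divide_right_mono mult_left_mono) auto
      also have "\<dots> \<le> 2 * T^3 * m * X / (25/4 * T^3 * X)"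
        using num1 m0 T1 X0 \<delta>0 by (intro divide_left_mono) auto
      also have "\<dots> = 8/25 * m" using T1 X0 by (simp add: field_simps)
      also have "\<dots> < m / 2" using m0 by simp
      finally show ?thesis using low by linarith
    qed
    have pwk: "\<forall>q\<in>Q0. length q = k" by (simp add: Q0_def pw_def walks_def)
    have Ik: "\<forall>i\<in>I. i < k" by (auto simp: I_def)
    have M0: "\<forall>i c. Mm i c \<ge> 0" using Mf_nonneg[OF \<delta>0] by (simp add: Mm_def)
    have wM: "\<forall>q\<in>Q0. \<forall>i\<in>I. wt F (butlast q) \<le> Mm i (q[i:=0])"
    proof (intro ballI)
      fix q i assume q: "q \<in> Q0" and i: "i \<in> I"
      have "q \<in> walks F k" using q by (simp add: Q0_def pw_def)
      moreover have "Suc i < k" using i by (auto simp: I_def)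
      ultimately show "wt F (butlast q) \<le> Mm i (q[i:=0])"
        unfolding Mm_def by (rule w_le_Mf[OF deg \<delta>0])
    qed
    obtain P where PQ: "P \<subseteq> Q0" and Pne: "P \<noteq> {}"
      and Prich: "\<forall>xs\<in>P. \<forall>i\<in>I. real (card {v. xs[i:=v] \<in> P}) \<ge> T^2"
    proof -
      have finQ0: "finite Q0" using finite_pw[OF finUF] by (simp add: Q0_def)
      have a0: "0 \<le> T^2" by simp
      show ?thesis using rich_core[OF finQ0 finI pwk Ik M0 wM a0 subset_refl main] that by blast
    qed
    have paths: "\<forall>xs\<in>P. is_path n E k xs"
    proof
      fix xs assume "xs \<in> P"
      then have "xs \<in> pw F k" using PQ by (auto simp: Q0_def)
      then have "length xs = k" "distinct xs" "set xs \<subseteq> \<Union>F"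
        "\<forall>j. j + 1 < k \<longrightarrow> {xs ! j, xs ! (j+1)} \<in> F"
        unfolding pw_def walks_def by auto
      then show "is_path n E k xs" using UF FE
        unfolding is_path_def by blast
    qed
    have "rich n E k (T^2) P"
      unfolding rich_def using paths Prich by (auto simp: I_def)
    then show "\<exists>P. P \<noteq> {} \<and> rich n E (2*t - 1) (real t ^ 2) P"
      using Pne by (auto simp: k_def T_def)
  qed
qed


end
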